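(* Let $d$ and $h$ be positive integers with $d\geq\frac{4}{3}\cdot 2^{2h-1}+h-1$. Let $T$ be the rooted tree of depth $d$ in which the root has exactly $5$ children and every non-root vertex at depth less than $d$ has exactly $4$ children (so $T$ has maximum degree $5$). Let $S$ be a set of $5\cdot 4^{d-h-1}$ leaves of $T$ that contains exactly one descendant of every vertex of depth $d-h$. Then $S$ is an exponential dominating set of $T$; in particular $\gamma_e(T)\leq 5\cdot 4^{d-h-1}$.
   Context: The depth of a vertex in a rooted tree is its distance from the root, and the depth of the tree is the maximum depth of a vertex. For a graph $G$, a set $S\subseteq V(G)$, and vertices $u,v$ with $u\in S$ or $v\in S$, ${\rm dist}_{(G,S)}(u,v)$ is the minimum number of edges of a path $P$ in $G$ between $u$ and $v$ such that $S$ contains exactly one endvertex of $P$ and no internal vertex of $P$, and $\infty$ if no such path exists (so ${\rm dist}_{(G,S)}(u,u)=0$ for $u\in S$). For $u\in V(G)$, $w_{(G,S)}(u)=\sum_{v\in S}(1/2)^{{\rm dist}_{(G,S)}(u,v)-1}$ with $(1/2)^{\infty}=0$. $S$ is an exponential dominating set of $G$ if $w_{(G,S)}(u)\geq 1$ for every $u\in V(G)$, and $\gamma_e(G)$ is the minimum cardinality of an exponential dominating set of $G$. *)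

theory Defs
  imports Complex_Main "HOL-Library.Extended_Nat" "HOL-Library.Sublist"
begin

definition is_path :: "'a set \<Rightarrow> ('a \<Rightarrow> 'a \<Rightarrow> bool) \<Rightarrow> 'a list \<Rightarrow> 'a \<Rightarrow> 'a \<Rightarrow> bool" where
  "is_path V E P u v \<longleftrightarrow> P \<noteq> [] \<and> hd P = u \<and> last P = v \<and> distinct P \<and> set P \<subseteq> V \<and>
     (\<forall>i. Suc i < length P \<longrightarrow> E (P ! i) (P ! Suc i))"

text \<open>S contains exactly one endvertex of P and no internal vertex of P
  (a one-vertex path is admissible iff its vertex lies in S, giving dist(u,u)=0 for u in S).\<close>
definition admissible :: "'a set \<Rightarrow> 'a list \<Rightarrow> bool" where
  "admissible S P \<longleftrightarrow>
     (length P = 1 \<and> hd P \<in> S) \<or>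
     (length P \<ge> 2 \<and> (hd P \<in> S \<longleftrightarrow> last P \<notin> S) \<and> (\<forall>x\<in>set (butlast (tl P)). x \<notin> S))"

text \<open>dist_(G,S)(u,v): minimum number of edges of an admissible path, infinity if none.\<close>
definition dist_GS :: "'a set \<Rightarrow> ('a \<Rightarrow> 'a \<Rightarrow> bool) \<Rightarrow> 'a set \<Rightarrow> 'a \<Rightarrow> 'a \<Rightarrow> enat" where
  "dist_GS V E S u v = (INF P \<in> {P. is_path V E P u v \<and> admissible S P}. enat (length P - 1))"

definition half_pow :: "enat \<Rightarrow> real" where
  "half_pow x = (case x of enat k \<Rightarrow> (1/2::real) powi (int k - 1) | \<infinity> \<Rightarrow> 0)"

definition exp_weight :: "'a set \<Rightarrow> ('a \<Rightarrow> 'a \<Rightarrow> bool) \<Rightarrow> 'a set \<Rightarrow> 'a \<Rightarrow> real" where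
  "exp_weight V E S u = (\<Sum>v\<in>S. half_pow (dist_GS V E S u v))"

definition exp_dominating :: "'a set \<Rightarrow> ('a \<Rightarrow> 'a \<Rightarrow> bool) \<Rightarrow> 'a set \<Rightarrow> bool" where
  "exp_dominating V E S \<longleftrightarrow> S \<subseteq> V \<and> (\<forall>u\<in>V. exp_weight V E S u \<ge> 1)"

definition gamma_e :: "'a set \<Rightarrow> ('a \<Rightarrow> 'a \<Rightarrow> bool) \<Rightarrow> nat" where
  "gamma_e V E = (LEAST n. \<exists>S. exp_dominating V E S \<and> card S = n)"

text \<open>The tree T of depth d: vertices are lists (addresses from the root []);
  the root has children [0],...,[4]; every other vertex xs of length < d has children
  xs@[0],...,xs@[3]. Depth of a vertex = its length.\<close>
definition tree_V :: "nat \<Rightarrow> nat list set" where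
  "tree_V d = {xs. length xs \<le> d \<and> (xs \<noteq> [] \<longrightarrow> hd xs < 5) \<and>
                  (\<forall>i. 0 < i \<and> i < length xs \<longrightarrow> xs ! i < 4)}"

definition tree_E :: "nat \<Rightarrow> nat list \<Rightarrow> nat list \<Rightarrow> bool" where
  "tree_E d xs ys \<longleftrightarrow> xs \<in> tree_V d \<and> ys \<in> tree_V d \<and>
     ((\<exists>c. ys = xs @ [c]) \<or> (\<exists>c. xs = ys @ [c]))"

end

theory Submission
  imports Defs
begin


lemma half_pow_enat: "half_pow (enat n) = 2 / 2^n"
  by (simp add: half_pow_def power_int_diff power_divide)

lemma half_pow_nonneg: "half_pow x \<ge> 0"
  by (cases x) (auto simp: half_pow_enat half_pow_def)

lemma half_pow_mono: "x \<le> enat n \<Longrightarrow> half_pow x \<ge> 2 / 2^n"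
  by (cases x) (auto simp: half_pow_enat frac_le)

lemma take_V: "xs \<in> tree_V d \<Longrightarrow> take i xs \<in> tree_V d"
  unfolding tree_V_def by (auto simp: hd_take)

lemma take_edge: "xs \<in> tree_V d \<Longrightarrow> Suc i \<le> length xs \<Longrightarrow> tree_E d (take i xs) (take (Suc i) xs)"
  unfolding tree_E_def using take_V[of xs d] take_Suc_conv_app_nth[of i xs]
  by (metis Suc_le_lessD)

lemma successively_upt:
  assumes "\<And>i. a \<le> i \<Longrightarrow> Suc i < b \<Longrightarrow> Q i (Suc i)"
  shows "successively Q [a..<b]"
  unfolding successively_conv_nth using assms by auto

lemma prefix_take_len: "prefix p xs \<Longrightarrow> take (length p) xs = p"
  by (auto simp: prefix_def)

lemma path_bound:
  assumes u: "u \<in> tree_V d" and v: "v \<in> tree_V d" and lv: "length v = d"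
    and uS: "u \<notin> S" and vS: "v \<in> S" and SV: "\<forall>x\<in>S. length x = d"
  shows "dist_GS (tree_V d) (tree_E d) S u v \<le> enat (length u + d - 2 * length (longest_common_prefix u v))"
proof -
  define p where "p = longest_common_prefix u v"
  define c where "c = length p"
  define k where "k = length u"
  have pu: "prefix p u" unfolding p_def by (rule longest_common_prefix_prefix1)
  have pv: "prefix p v" unfolding p_def by (rule longest_common_prefix_prefix2)
  have tu: "take c u = p" using pu prefix_take_len c_def by blast
  have tv: "take c v = p" using pv prefix_take_len c_def by blast
  have ck: "c \<le> k" using pu prefix_length_le c_def k_def by blast
  have kd: "k \<le> d" using u unfolding tree_V_def k_def by auto
  have maxp: "length q \<le> c" if "prefix q u" "prefix q v" for q
    using longest_common_prefix_max_prefix[OF that] prefix_length_le c_def p_def by blast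
  have cd: "c < d"
  proof (rule ccontr)
    assume "\<not> c < d"
    then have "c = d" using pv prefix_length_le c_def lv by fastforce
    then have "p = v" using tv lv by simp
    then have "prefix v u" using pu by simp
    then obtain zs where "u = v @ zs" by (auto simp: prefix_def)
    moreover have "zs = []" using calculation kd k_def lv by simp
    ultimately have "u = v" by simp
    then show False using uS vS by simp
  qed
  define P1 where "P1 = map (\<lambda>i. take i u) (rev [c..<Suc k])"
  define P2 where "P2 = map (\<lambda>i. take i v) [Suc c..<Suc d]"
  define P where "P = P1 @ P2"
  have P1ne: "P1 \<noteq> []" using ck by (simp add: P1_def)
  have P2ne: "P2 \<noteq> []" using cd by (simp add: P2_def)
  have hdP: "hd P = u" using P1ne ck by (simp add: P_def P1_def hd_rev k_def)
  have lastP: "last P = v" using P2ne cd lv by (simp add: P_def P2_def last_map)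
  have inj1: "inj_on (\<lambda>i. take i u) {c..<Suc k}"
  proof (rule inj_onI)
    fix i j assume "i \<in> {c..<Suc k}" "j \<in> {c..<Suc k}" "take i u = take j u"
    then have "i \<le> k" "j \<le> k" "take i u = take j u" by auto
    have "i = length (take i u)" using \<open>i \<le> k\<close> k_def by simp
    also have "\<dots> = length (take j u)" using \<open>take i u = take j u\<close> by simp
    also have "\<dots> = j" using \<open>j \<le> k\<close> k_def by simp
    finally show "i = j" .
  qed
  have inj2: "inj_on (\<lambda>i. take i v) {Suc c..<Suc d}"
  proof (rule inj_onI)
    fix i j assume "i \<in> {Suc c..<Suc d}" "j \<in> {Suc c..<Suc d}" "take i v = take j v"
    then have "i \<le> d" "j \<le> d" "take i v = take j v" by auto
    have "i = length (take i v)" using \<open>i \<le> d\<close> lv by simp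
    also have "\<dots> = length (take j v)" using \<open>take i v = take j v\<close> by simp
    also have "\<dots> = j" using \<open>j \<le> d\<close> lv by simp
    finally show "i = j" .
  qed
  have d1: "distinct P1" unfolding P1_def using inj1
    by (simp only: distinct_map distinct_rev distinct_upt set_rev set_upt)
  have d2: "distinct P2" unfolding P2_def using inj2
    by (simp only: distinct_map distinct_upt set_upt)
  have d3: "set P1 \<inter> set P2 = {}"
  proof (rule ccontr)
    assume "set P1 \<inter> set P2 \<noteq> {}"
    then obtain x where x1: "x \<in> set P1" and x2: "x \<in> set P2" by blast
    have "x \<in> (\<lambda>i. take i u) ` {c..<Suc k}" using x1 unfolding P1_def by (simp only: set_map set_rev set_upt)
    then obtain i where i: "i \<in> {c..<Suc k}" "x = take i u" by blast
    have "x \<in> (\<lambda>i. take i v) ` {Suc c..<Suc d}" using x2 unfolding P2_def by (simp only: set_map set_upt)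
    then obtain j where j: "j \<in> {Suc c..<Suc d}" "x = take j v" by blast
    have ij: "c \<le> i" "i \<le> k" "c < j" "j \<le> d" "take i u = take j v" using i j by auto
    have "i = length (take i u)" using ij(2) k_def by simp
    also have "\<dots> = length (take j v)" using ij(5) by simp
    also have "\<dots> = j" using ij(4) lv by simp
    finally have "i = j" .
    then have "prefix (take j u) u" "prefix (take j u) v" using ij
      by (auto simp: take_is_prefix) (metis take_is_prefix)
    then have "length (take j u) \<le> c" by (rule maxp)
    then show False using ij \<open>i = j\<close> k_def by simp
  qed
  have distP: "distinct P" using d1 d2 d3 by (simp add: P_def)
  have setP: "set P \<subseteq> tree_V d" using u v take_V unfolding P_def P1_def P2_def by auto
  have s1: "successively (tree_E d) P1" unfolding P1_def successively_map successively_rev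
  proof (rule successively_upt)
    fix i assume "c \<le> i" "Suc i < Suc k"
    then show "tree_E d (take (Suc i) u) (take i u)"
      using take_edge[OF u, of i] k_def unfolding tree_E_def by auto
  qed
  have s2: "successively (tree_E d) P2" unfolding P2_def successively_map
  proof (rule successively_upt)
    fix i assume "Suc c \<le> i" "Suc i < Suc d"
    then show "tree_E d (take i v) (take (Suc i) v)"
      using take_edge[OF v, of i] lv by auto
  qed
  have lastP1: "last P1 = take c u" using ck by (simp add: P1_def last_map last_rev)
  have hdP2: "hd P2 = take (Suc c) v" using cd by (simp add: P2_def upt_conv_Cons del: upt_Suc)
  have s3: "tree_E d (last P1) (hd P2)" unfolding lastP1 hdP2 tu
    using take_edge[OF v, of c] cd lv tv by auto
  have succP: "successively (tree_E d) P" unfolding P_def successively_append_iff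
    using s1 s2 s3 by blast
  have pathP: "is_path (tree_V d) (tree_E d) P u v"
    unfolding is_path_def using hdP lastP distP setP succP P1ne
    by (auto simp: P_def successively_conv_nth)
  have lenP: "length P = Suc k - c + (d - c)" by (simp add: P_def P1_def P2_def del: upt_Suc)
  have bl: "\<forall>x\<in>set (butlast P). x \<notin> S"
  proof
    fix x assume "x \<in> set (butlast P)"
    then have "x \<in> set P1 \<or> x \<in> set (butlast P2)" using P2ne by (simp add: P_def butlast_append)
    then show "x \<notin> S"
    proof
      assume "x \<in> set P1"
      then have "x \<in> (\<lambda>i. take i u) ` {c..<Suc k}" unfolding P1_def by (simp only: set_map set_rev set_upt)
      then obtain i where i0: "i \<in> {c..<Suc k}" "x = take i u" by blast
      then have "i \<le> k" "x = take i u" by auto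
      then show ?thesis using uS SV kd k_def by (cases "i = k") auto
    next
      assume "x \<in> set (butlast P2)"
      moreover have "butlast P2 = map (\<lambda>i. take i v) [Suc c..<d]" unfolding P2_def using cd
        by (simp add: map_butlast[symmetric])
      ultimately have "x \<in> (\<lambda>i. take i v) ` {Suc c..<d}" by (simp only: set_map set_upt)
      then obtain i where "i \<in> {Suc c..<d}" "x = take i v" by blast
      then have "i < d" "x = take i v" by auto
      then show ?thesis using SV lv by auto
    qed
  qed
  have "set (butlast (tl P)) \<subseteq> set (butlast P)"
    by (metis butlast_tl list.set_sel(2) subsetI tl_Nil)
  then have "\<forall>x\<in>set (butlast (tl P)). x \<notin> S" using bl by blast
  moreover have "length P \<ge> 2" using lenP ck cd by simp
  moreover have "hd P \<in> S \<longleftrightarrow> last P \<notin> S" using hdP lastP uS vS by simp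
  ultimately have admP: "admissible S P" unfolding admissible_def by blast
  have "dist_GS (tree_V d) (tree_E d) S u v \<le> enat (length P - 1)"
    unfolding dist_GS_def using pathP admP by (intro INF_lower) auto
  also have "length P - 1 = length u + d - 2 * length (longest_common_prefix u v)"
    using lenP ck cd k_def c_def p_def by simp
  finally show ?thesis .
qed



lemma geom4: "(4::nat)^c = 1 + 3 * (\<Sum>j\<in>{1..c}. 4^(j-1))"
proof (induction c)
  case (Suc c)
  have "(\<Sum>j\<in>{1..Suc c}. (4::nat)^(j-1)) = (\<Sum>j\<in>{1..c}. 4^(j-1)) + 4^c"
    by (simp add: sum.cl_ivl_Suc)
  then show ?case using Suc by simp
qed simp

lemma sum_pow4:
  fixes c :: "'a \<Rightarrow> nat"
  assumes fin: "finite D" and cm: "\<forall>x\<in>D. c x \<le> m"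
  shows "(\<Sum>x\<in>D. (4::nat)^(c x)) = card D + 3 * (\<Sum>j\<in>{1..m}. 4^(j-1) * card {x\<in>D. j \<le> c x})"
proof -
  have e: "(4::nat)^(c x) = 1 + 3 * (\<Sum>j\<in>{1..m}. if j \<le> c x then 4^(j-1) else 0)" if "x \<in> D" for x
  proof -
    have se: "{j\<in>{1..m}. j \<le> c x} = {1..c x}" using cm that by auto
    have "(\<Sum>j\<in>{1..m}. if j \<le> c x then (4::nat)^(j-1) else 0) = (\<Sum>j\<in>{j\<in>{1..m}. j \<le> c x}. 4^(j-1))"
      by (rule sum.inter_filter[symmetric]) simp
    then have "(\<Sum>j\<in>{1..m}. if j \<le> c x then (4::nat)^(j-1) else 0) = (\<Sum>j\<in>{1..c x}. 4^(j-1))"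
      unfolding se .
    then show ?thesis using geom4[of "c x"] by presburger
  qed
  have "(\<Sum>x\<in>D. (4::nat)^(c x)) = (\<Sum>x\<in>D. 1 + 3 * (\<Sum>j\<in>{1..m}. if j \<le> c x then 4^(j-1) else 0))"
    using e by (rule sum.cong[OF refl])
  also have "\<dots> = card D + 3 * (\<Sum>x\<in>D. \<Sum>j\<in>{1..m}. if j \<le> c x then 4^(j-1) else 0)"
    by (simp only: sum.distrib sum_distrib_left[symmetric] sum_constant) simp
  also have "(\<Sum>x\<in>D. \<Sum>j\<in>{1..m}. if j \<le> c x then (4::nat)^(j-1) else 0) =
      (\<Sum>j\<in>{1..m}. \<Sum>x\<in>D. if j \<le> c x then 4^(j-1) else 0)"
    by (rule sum.swap)
  also have "\<dots> = (\<Sum>j\<in>{1..m}. 4^(j-1) * card {x\<in>D. j \<le> c x})"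
  proof (rule sum.cong[OF refl])
    fix j
    have "(\<Sum>x\<in>D. if j \<le> c x then (4::nat)^(j-1) else 0) = (\<Sum>x\<in>{x\<in>D. j \<le> c x}. 4^(j-1))"
      by (rule sum.inter_filter[symmetric, OF fin])
    then show "(\<Sum>x\<in>D. if j \<le> c x then (4::nat)^(j-1) else 0) = 4^(j-1) * card {x\<in>D. j \<le> c x}"
      by simp
  qed
  finally show ?thesis .
qed

lemma lcp_iff:
  assumes "j \<le> length u"
  shows "j \<le> length (longest_common_prefix u x) \<longleftrightarrow> prefix (take j u) x"
proof
  define p where "p = longest_common_prefix u x"
  assume j: "j \<le> length (longest_common_prefix u x)"
  then have j': "j \<le> length p" by (simp add: p_def)
  obtain r where r: "u = p @ r" using longest_common_prefix_prefix1[of u x] by (auto simp: prefix_def p_def)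
  have "take j u = take j p" unfolding r using j' by simp
  moreover have "prefix (take j p) p" by (rule take_is_prefix)
  moreover have "prefix p x" unfolding p_def by (rule longest_common_prefix_prefix2)
  ultimately show "prefix (take j u) x"
    using prefix_order.trans by metis
next
  assume "prefix (take j u) x"
  then have "prefix (take j u) (longest_common_prefix u x)"
    by (intro longest_common_prefix_max_prefix) (auto simp: take_is_prefix)
  then have "length (take j u) \<le> length (longest_common_prefix u x)" by (rule prefix_length_le)
  then show "j \<le> length (longest_common_prefix u x)" using assms by simp
qed

lemma card_ext:
  assumes p: "p \<in> tree_V d" and lp: "length p = j" and j1: "1 \<le> j" and jn: "j \<le> n" and nd: "n \<le> d"
  shows "card {x \<in> {x\<in>tree_V d. length x = n}. prefix p x} = 4^(n - j)"
proof -
  let ?W = "{y. set y \<subseteq> {0..<4::nat} \<and> length y = n - j}"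
  have eq: "{x \<in> {x\<in>tree_V d. length x = n}. prefix p x} = (\<lambda>y. p @ y) ` ?W"
  proof (rule set_eqI, rule iffI)
    fix x assume "x \<in> {x \<in> {x\<in>tree_V d. length x = n}. prefix p x}"
    then have xV: "x \<in> tree_V d" and lx: "length x = n" and px: "prefix p x" by auto
    then obtain y where xy: "x = p @ y" by (auto simp: prefix_def)
    have "set y \<subseteq> {0..<4}"
    proof
      fix a assume "a \<in> set y"
      then obtain i where i: "i < length y" "y ! i = a" by (auto simp: in_set_conv_nth)
      have "x ! (j + i) = a" using xy i lp by (simp add: nth_append)
      moreover have "0 < j + i" "j + i < length x" using j1 i xy lp by auto
      ultimately show "a \<in> {0..<4}" using xV unfolding tree_V_def by auto
    qed
    moreover have "length y = n - j" using xy lx lp by simp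
    ultimately show "x \<in> (\<lambda>y. p @ y) ` ?W" using xy by auto
  next
    fix x assume "x \<in> (\<lambda>y. p @ y) ` ?W"
    then obtain y where xy: "x = p @ y" and y: "set y \<subseteq> {0..<4}" "length y = n - j" by auto
    have pne: "p \<noteq> []" using lp j1 by auto
    have lx: "length x = n" using xy y lp jn by simp
    have "x \<in> tree_V d" unfolding tree_V_def
    proof (intro CollectI conjI impI allI)
      show "length x \<le> d" using lx nd by simp
      show "hd x < 5" using p pne xy unfolding tree_V_def by auto
      fix i assume i: "0 < i \<and> i < length x"
      show "x ! i < 4"
      proof (cases "i < length p")
        case True
        then show ?thesis using p i xy unfolding tree_V_def by (auto simp: nth_append)
      next
        case False
        then have "y ! (i - length p) \<in> set y" using i xy by auto
        then show ?thesis using False xy y by (auto simp: nth_append)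
      qed
    qed
    then show "x \<in> {x \<in> {x\<in>tree_V d. length x = n}. prefix p x}" using lx xy by auto
  qed
  have "card ((\<lambda>y. p @ y) ` ?W) = card ?W" by (rule card_image) (auto simp: inj_on_def)
  also have "\<dots> = 4^(n-j)" using card_lists_length_eq[of "{0..<4::nat}" "n - j"] by simp
  finally show ?thesis using eq by simp
qed

lemma numeric:
  fixes d h n k :: nat
  assumes H: "2^(2*h+1) + 3*h \<le> 3*d + 3" and h1: "h \<ge> 1" and n: "n = d - h" and n1: "n \<ge> 1"
    and kd: "k \<le> d"
  shows "2^(k+d) \<le> 2 * 4^(n-1) * (5 + 3 * min k n)"
proof -
  have key: "2^(2*h+1) \<le> 2^(d-k) * (5 + 3 * min k n)"
  proof (cases "n \<le> k")
    case True
    then have "2^(2*h+1) \<le> 5 + 3 * min k n" using H n by simp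
    also have "\<dots> \<le> 2^(d-k) * (5 + 3 * min k n)" by simp
    finally show ?thesis .
  next
    case False
    have P: "2^(h+1) * (3*n+2) \<le> 2^(d-i) * (5 + 3*i)" if "i \<le> n - 1" for i
      using that
    proof (induction i rule: inc_induct)
      case base
      have e1: "d - (n-1) = h+1" using n n1 by simp
      have e2: "5 + 3*(n-1) = 3*n+2" using n1 by simp
      show ?case by (simp only: e1 e2 order_refl)
    next
      case (step i)
      have "d - i = Suc (d - Suc i)" using step n by simp
      then have "(2::nat)^(d-i) * (5 + 3*i) = 2^(d - Suc i) * (10 + 6*i)" by simp
      moreover have "(2::nat)^(d - Suc i) * (5 + 3 * Suc i) \<le> 2^(d - Suc i) * (10 + 6*i)" by simp
      ultimately show ?case using step by linarith
    qed
    have a1: "\<And>a::nat. 1 \<le> a \<Longrightarrow> a + 1 \<le> a*a*2" by (case_tac a) (auto simp: algebra_simps)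
    have hh: "2*h+1 = h+h+1" by simp
    have p2: "(2::nat)^(2*h+1) = 2^h * 2^h * 2" unfolding hh by (simp only: power_add power_one_right)
    have "(2::nat)^h + 1 \<le> 2^(2*h+1)" unfolding p2 by (rule a1) simp
    then have "2^h \<le> 3*n+2" using H n by simp
    moreover have "(2::nat)^(2*h+1) = 2^(h+1) * 2^h"
    proof -
      have "2*h+1 = (h+1)+h" by simp
      then show ?thesis by (simp only: power_add)
    qed
    ultimately have "(2::nat)^(2*h+1) \<le> 2^(h+1) * (3*n+2)" by (metis mult_le_mono2)
    also have "\<dots> \<le> 2^(d-k) * (5 + 3*k)" using P[of k] False by simp
    finally show ?thesis using False by simp
  qed
  have e: "(2::nat) * 4^(n-1) * 2^(2*h+1) = 2^(2*d)"
  proof -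
    have "(2::nat) * 4^(n-1) * 2^(2*h+1) = 2^(1 + 2*(n-1) + (2*h+1))"
      by (simp add: power_add power_mult)
    also have "1 + 2*(n-1) + (2*h+1) = 2*d" using n n1 by simp
    finally show ?thesis .
  qed
  have "2^(k+d) * 2^(2*h+1) \<le> 2^(k+d) * (2^(d-k) * (5 + 3 * min k n))"
    using key by simp
  also have "\<dots> = 2^(2*d) * (5 + 3 * min k n)"
  proof -
    have "k + d + (d - k) = 2*d" using kd by simp
    then show ?thesis by (metis mult.assoc power_add)
  qed
  also have "\<dots> = (2 * 4^(n-1) * (5 + 3 * min k n)) * 2^(2*h+1)" using e by (metis mult.commute mult.assoc)
  finally show ?thesis by simp
qed



lemma frac_mono2: "a \<le> b \<Longrightarrow> (2::real)/2^b \<le> 2/2^a"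
  by (rule divide_left_mono) (auto simp: power_increasing)

lemma frac_split: "2*e \<le> N \<Longrightarrow> (2::real)/2^(N - 2*e) = 2/2^N * real (4^e)"
proof -
  assume a: "2*e \<le> N"
  have "(2::real)^N = 2^(N - 2*e) * 2^(2*e)" using a by (simp flip: power_add)
  moreover have "(2::real)^(2*e) = 4^e" by (simp add: power_mult)
  ultimately show ?thesis by (simp add: field_simps)
qed

theorem mainTheorem15:
  fixes d h :: nat and S :: "nat list set"
  assumes "d > 0" and "h > 0"
    and "real d \<ge> 4/3 * 2 ^ (2*h - 1) + real h - 1"
    and "S \<subseteq> {x \<in> tree_V d. length x = d}"
    and "card S = 5 * 4 ^ (d - h - 1)"
    and "\<forall>v\<in>tree_V d. length v = d - h \<longrightarrow> card {x\<in>S. prefix v x} = 1"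
  shows "exp_dominating (tree_V d) (tree_E d) S \<and>
         gamma_e (tree_V d) (tree_E d) \<le> 5 * 4 ^ (d - h - 1)"
proof -
  define n where "n = d - h"
  have SV: "\<forall>x\<in>S. length x = d" and SsubV: "S \<subseteq> tree_V d" using assms(4) by auto
  have H: "2^(2*h+1) + 3*h \<le> 3*d + 3"
  proof -
    have hh: "2*h+1 = (2*h-1) + 2" using assms(2) by simp
    have "(2::real)^(2*h+1) = 4 * 2^(2*h-1)" unfolding hh by (simp add: power_add)
    then have "real (2^(2*h+1) + 3*h) \<le> real (3*d+3)" using assms(3) by simp
    then show ?thesis by linarith
  qed
  have "(2::nat)^3 \<le> 2^(2*h+1)" using assms(2) by (intro power_increasing) auto
  then have n1: "n \<ge> 1" using H n_def by simp
  have nd: "n \<le> d" using n_def by simp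
  have cardS: "card S = 5 * 4^(n-1)" using assms(5) n_def by simp
  then have finS: "finite S" using card_gt_0_iff by fastforce
  define D where "D = {x\<in>tree_V d. length x = n}"
  define s where "s x = (THE y. y \<in> S \<and> prefix x y)" for x
  have sx: "s x \<in> S \<and> prefix x (s x) \<and> (\<forall>y. y \<in> S \<and> prefix x y \<longrightarrow> y = s x)" if "x \<in> D" for x
  proof -
    have "card {y\<in>S. prefix x y} = 1" using assms(6) that unfolding D_def n_def by auto
    then obtain a where a: "{y\<in>S. prefix x y} = {a}" by (rule card_1_singletonE)
    then have ex: "\<And>y. y \<in> S \<and> prefix x y \<longleftrightarrow> y = a" by blast
    have "s x = a" unfolding s_def by (rule the_equality) (use ex in blast)+
    then show ?thesis using ex by blast
  qed
  have injs: "inj_on s D"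
  proof (rule inj_onI)
    fix x x' assume x: "x \<in> D" and x': "x' \<in> D" and e: "s x = s x'"
    have px: "prefix x (s x)" using sx[OF x] by blast
    have lx: "length x = n" using x unfolding D_def by simp
    have "take n (s x) = x" using prefix_take_len[OF px] lx by simp
    then have "x = take n (s x)" by simp
    also have "\<dots> = take n (s x')" using e by simp
    also have "\<dots> = x'"
    proof -
      have px: "prefix x' (s x')" using sx[OF x'] by blast
      have lx: "length x' = n" using x' unfolding D_def by simp
      show ?thesis using prefix_take_len[OF px] lx by simp
    qed
    finally show "x = x'" .
  qed
  have imgs: "s ` D = S"
  proof
    show "s ` D \<subseteq> S" using sx by blast
    show "S \<subseteq> s ` D"
    proof
      fix y assume y: "y \<in> S"
      have "take n y \<in> D" unfolding D_def using take_V[of y d n] SsubV SV y nd by auto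
      moreover have "prefix (take n y) y" by (rule take_is_prefix)
      ultimately have "y = s (take n y)" using sx y by blast
      then show "y \<in> s ` D" using \<open>take n y \<in> D\<close> by blast
    qed
  qed
  have "finite (s ` D)" using finS imgs by simp
  then have finD: "finite D" using finite_image_iff[OF injs] by simp
  have "card (s ` D) = card D" by (rule card_image[OF injs])
  then have cardD: "card D = 5 * 4^(n-1)" using imgs cardS by simp
  have w: "exp_weight (tree_V d) (tree_E d) S u \<ge> 1" if uV: "u \<in> tree_V d" for u
  proof (cases "u \<in> S")
    case True
    have "is_path (tree_V d) (tree_E d) [u] u u" unfolding is_path_def using uV by auto
    moreover have "admissible S [u]" unfolding admissible_def using True by simp
    ultimately have "dist_GS (tree_V d) (tree_E d) S u u \<le> enat 0"
      unfolding dist_GS_def by (intro INF_lower2[of "[u]"]) auto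
    then have "half_pow (dist_GS (tree_V d) (tree_E d) S u u) \<ge> 2" using half_pow_mono by fastforce
    also have "half_pow (dist_GS (tree_V d) (tree_E d) S u u) \<le> exp_weight (tree_V d) (tree_E d) S u"
      unfolding exp_weight_def using True finS half_pow_nonneg by (intro member_le_sum) auto
    finally show ?thesis by simp
  next
    case False
    define k where "k = length u"
    have kd: "k \<le> d" using uV unfolding tree_V_def k_def by auto
    define c where "c x = length (longest_common_prefix u x)" for x
    define m where "m = min k n"
    have WC: "exp_weight (tree_V d) (tree_E d) S u \<ge> (\<Sum>v\<in>S. 2/2^(k + d - 2 * length (longest_common_prefix u v)))"
      unfolding exp_weight_def
    proof (rule sum_mono)
      fix v assume v: "v \<in> S"
      show "(2::real)/2^(k + d - 2 * length (longest_common_prefix u v)) \<le> half_pow (dist_GS (tree_V d) (tree_E d) S u v)"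
        using path_bound[OF uV _ _ False v SV] v SsubV SV half_pow_mono k_def by auto
    qed
    have WB: "(\<Sum>v\<in>S. (2::real)/2^(k + d - 2 * length (longest_common_prefix u v))) =
        (\<Sum>x\<in>D. 2/2^(k + d - 2 * length (longest_common_prefix u (s x))))"
      unfolding imgs[symmetric] sum.reindex[OF injs] by simp
    have WA: "(\<Sum>x\<in>D. 2/2^(k + d - 2 * length (longest_common_prefix u (s x)))) \<ge> (\<Sum>x\<in>D. (2::real)/2^(k + d - 2 * c x))"
    proof (rule sum_mono)
      fix x assume x: "x \<in> D"
      have "prefix (longest_common_prefix u x) (s x)"
        using longest_common_prefix_prefix2[of u x] sx[OF x] prefix_order.trans by blast
      then have "prefix (longest_common_prefix u x) (longest_common_prefix u (s x))"
        by (intro longest_common_prefix_max_prefix longest_common_prefix_prefix1)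
      then have "c x \<le> length (longest_common_prefix u (s x))" unfolding c_def by (rule prefix_length_le)
      then show "(2::real)/2^(k + d - 2 * c x) \<le> 2/2^(k + d - 2 * length (longest_common_prefix u (s x)))"
        by (intro frac_mono2) simp
    qed
    have W1: "exp_weight (tree_V d) (tree_E d) S u \<ge> (\<Sum>x\<in>D. (2::real)/2^(k + d - 2 * c x))"
      using WA WB WC by linarith
    have cm: "\<forall>x\<in>D. c x \<le> m"
    proof
      fix x assume x: "x \<in> D"
      have "c x \<le> k" unfolding c_def k_def using longest_common_prefix_prefix1 prefix_length_le by blast
      moreover have "c x \<le> length x" unfolding c_def using longest_common_prefix_prefix2 prefix_length_le by blast
      ultimately show "c x \<le> m" using x unfolding m_def D_def by simp
    qed
    have "(\<Sum>x\<in>D. (2::real)/2^(k + d - 2 * c x)) = (\<Sum>x\<in>D. 2/2^(k+d) * real (4^(c x)))"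
    proof (rule sum.cong[OF refl])
      fix x assume "x \<in> D"
      then have "2 * c x \<le> k + d" using cm m_def nd by fastforce
      then show "(2::real)/2^(k + d - 2 * c x) = 2/2^(k+d) * real (4^(c x))" by (rule frac_split)
    qed
    also have "\<dots> = 2/2^(k+d) * real (\<Sum>x\<in>D. 4^(c x))" by (simp add: sum_distrib_left)
    finally have W2: "exp_weight (tree_V d) (tree_E d) S u \<ge> 2/2^(k+d) * real (\<Sum>x\<in>D. 4^(c x))" using W1 by simp
    have "(\<Sum>x\<in>D. (4::nat)^(c x)) = card D + 3 * (\<Sum>j\<in>{1..m}. 4^(j-1) * card {x\<in>D. j \<le> c x})"
      by (rule sum_pow4[OF finD cm])
    also have "(\<Sum>j\<in>{1..m}. 4^(j-1) * card {x\<in>D. j \<le> c x}) = (\<Sum>j\<in>{1..m}. 4^(n-1))"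
    proof (rule sum.cong[OF refl])
      fix j assume j: "j \<in> {1..m}"
      then have jk: "j \<le> k" and jn: "j \<le> n" and j1: "1 \<le> j" unfolding m_def by auto
      have "{x\<in>D. j \<le> c x} = {x\<in>D. prefix (take j u) x}"
        unfolding c_def using lcp_iff[of j u] jk k_def by auto
      then have "card {x\<in>D. j \<le> c x} = 4^(n-j)"
        using card_ext[OF take_V[OF uV] _ j1 jn nd, of j] jk k_def unfolding D_def by simp
      moreover have "(4::nat)^(j-1) * 4^(n-j) = 4^(n-1)"
      proof -
        have "(j-1) + (n-j) = n-1" using j1 jn by simp
        then show ?thesis by (metis power_add)
      qed
      ultimately show "4^(j-1) * card {x\<in>D. j \<le> c x} = (4::nat)^(n-1)" by simp
    qed
    also have "(\<Sum>j\<in>{1..m}. (4::nat)^(n-1)) = m * 4^(n-1)" by simp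
    finally have "(\<Sum>x\<in>D. (4::nat)^(c x)) = 4^(n-1) * (5 + 3*m)" using cardD by (simp add: algebra_simps)
    with W2 have W3: "exp_weight (tree_V d) (tree_E d) S u \<ge> 2/2^(k+d) * real (4^(n-1) * (5 + 3*m))" by simp
    have "2^(k+d) \<le> 2 * 4^(n-1) * (5 + 3 * min k n)"
      by (rule numeric[OF H _ n_def n1 kd]) (use assms(2) in simp)
    then have "real (2^(k+d)) \<le> real (2 * 4^(n-1) * (5 + 3 * m))" unfolding m_def by (simp only: of_nat_le_iff)
    then have "(2::real)^(k+d) \<le> 2 * real (4^(n-1) * (5 + 3*m))" by simp
    then have "1 \<le> 2/2^(k+d) * real (4^(n-1) * (5 + 3*m))" by (simp add: field_simps)
    then show ?thesis using W3 by linarith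
  qed
  have dom: "exp_dominating (tree_V d) (tree_E d) S" unfolding exp_dominating_def using SsubV w by blast
  have "gamma_e (tree_V d) (tree_E d) \<le> card S" unfolding gamma_e_def
    by (rule Least_le) (use dom in blast)
  then show ?thesis using dom assms(5) by simp
qed

end
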